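(* For any graph $G=(V,E)$ and any ordering of its edges, the output $P$ of the port-based greedy procedure (Algorithm 1) described in the context is a collection of vertex-disjoint paths.
   Context: Algorithm 1: initialize $P\gets\emptyset$. Each vertex $v$ has two ports $v^0,v^1$, initially free. Iterate over the edges of $G$ in the given ordering; upon visiting $e=(u,v)$: if $v^0$ and $u^0$ are free, add $e$ to $P$ and mark $v^0,u^0$ occupied; else if $v^1$ and $u^0$ are free, add $e$ to $P$ and mark $v^1,u^0$ occupied; else if $v^0$ and $u^1$ are free, add $e$ to $P$ and mark $v^0,u^1$ occupied; otherwise skip $e$. Return $P$. *)

theory Defs
  imports Main
begin

(* State of Algorithm 1: (P, O0, O1) where P is the list of selected (oriented) edges,
   O0 the set of vertices whose port 0 is occupied, O1 those whose port 1 is occupied. *)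
definition greedy_step ::
  "('a \<times> 'a) list \<times> 'a set \<times> 'a set \<Rightarrow> 'a \<times> 'a \<Rightarrow> ('a \<times> 'a) list \<times> 'a set \<times> 'a set" where
  "greedy_step st e = (case st of (P, O0, O1) \<Rightarrow> (case e of (u, v) \<Rightarrow>
     if v \<notin> O0 \<and> u \<notin> O0 then (P @ [(u, v)], insert v (insert u O0), O1)
     else if v \<notin> O1 \<and> u \<notin> O0 then (P @ [(u, v)], insert u O0, insert v O1)
     else if v \<notin> O0 \<and> u \<notin> O1 then (P @ [(u, v)], insert v O0, insert u O1)
     else (P, O0, O1)))"

definition algorithm1 :: "('a \<times> 'a) list \<Rightarrow> ('a \<times> 'a) list" where
  "algorithm1 es = fst (foldl greedy_step ([], {}, {}) es)"

definition undir :: "'a \<times> 'a \<Rightarrow> 'a set" where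
  "undir e = (case e of (u, v) \<Rightarrow> {u, v})"

definition is_path :: "'a list \<Rightarrow> bool" where
  "is_path xs \<longleftrightarrow> distinct xs \<and> length xs \<ge> 2"

definition path_edges :: "'a list \<Rightarrow> 'a set set" where
  "path_edges xs = {{xs ! i, xs ! Suc i} | i. Suc i < length xs}"

definition vertex_disjoint_paths :: "'a set set \<Rightarrow> bool" where
  "vertex_disjoint_paths P \<longleftrightarrow>
     (\<exists>Ps. finite Ps \<and> (\<forall>p\<in>Ps. is_path p) \<and>
          (\<forall>p\<in>Ps. \<forall>q\<in>Ps. p \<noteq> q \<longrightarrow> set p \<inter> set q = {}) \<and>
          P = \<Union> (path_edges ` Ps))"

definition simple_graph :: "'a set \<Rightarrow> 'a set set \<Rightarrow> bool" where
  "simple_graph V E \<longleftrightarrow> finite V \<and> (\<forall>e\<in>E. \<exists>u v. e = {u, v} \<and> u \<in> V \<and> v \<in> V \<and> u \<noteq> v)"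

definition edge_ordering :: "'a set set \<Rightarrow> ('a \<times> 'a) list \<Rightarrow> bool" where
  "edge_ordering E es \<longleftrightarrow> distinct (map undir es) \<and> set (map undir es) = E"

end

theory Submission
  imports Defs
begin

definition interior :: "'a list \<Rightarrow> 'a set" where
  "interior p = set p - {hd p, last p}"

definition ginv :: "('a \<times> 'a) list \<times> 'a set \<times> 'a set \<Rightarrow> 'a list set \<Rightarrow> bool" where
  "ginv st Ps \<longleftrightarrow> (case st of (P, O0, O1) \<Rightarrow>
     finite Ps \<and> (\<forall>p\<in>Ps. is_path p) \<and>
     (\<forall>p\<in>Ps. \<forall>q\<in>Ps. p \<noteq> q \<longrightarrow> set p \<inter> set q = {}) \<and>
     set (map undir P) = \<Union> (path_edges ` Ps) \<and>
     O0 = \<Union> (set ` Ps) \<and> O1 = \<Union> (interior ` Ps))"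

lemma path_edges_snoc:
  assumes "p \<noteq> []"
  shows "path_edges (p @ [u]) = insert {last p, u} (path_edges p)"
proof -
  have "path_edges (p @ [u]) = {{(p@[u]) ! i, (p@[u]) ! Suc i} | i. Suc i < Suc (length p)}"
    by (simp add: path_edges_def)
  also have "\<dots> = insert {last p, u} (path_edges p)"
  proof (rule set_eqI, rule iffI)
    fix e assume "e \<in> {{(p@[u]) ! i, (p@[u]) ! Suc i} | i. Suc i < Suc (length p)}"
    then obtain i where i: "Suc i < Suc (length p)" "e = {(p@[u]) ! i, (p@[u]) ! Suc i}" by blast
    show "e \<in> insert {last p, u} (path_edges p)"
    proof (cases "Suc i < length p")
      case True
      then show ?thesis using i by (auto simp: path_edges_def nth_append)
    next
      case False
      then have "i = length p - 1" "Suc i = length p" using i by auto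
      then show ?thesis using i assms by (simp add: nth_append last_conv_nth)
    qed
  next
    fix e assume "e \<in> insert {last p, u} (path_edges p)"
    then show "e \<in> {{(p@[u]) ! i, (p@[u]) ! Suc i} | i. Suc i < Suc (length p)}"
    proof
      assume "e = {last p, u}"
      then have "e = {(p@[u]) ! (length p - 1), (p@[u]) ! Suc (length p - 1)}"
        using assms by (simp add: nth_append last_conv_nth)
      moreover have "Suc (length p - 1) < Suc (length p)" using assms by simp
      ultimately show ?thesis by blast
    next
      assume "e \<in> path_edges p"
      then obtain i where "Suc i < length p" "e = {p ! i, p ! Suc i}" by (auto simp: path_edges_def)
      then have "e = {(p@[u]) ! i, (p@[u]) ! Suc i}" "Suc i < Suc (length p)"
        by (auto simp: nth_append)
      then show ?thesis by blast
    qed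
  qed
  finally show ?thesis .
qed

lemma path_edges_cons:
  assumes "p \<noteq> []"
  shows "path_edges (u # p) = insert {u, hd p} (path_edges p)"
proof (rule set_eqI, rule iffI)
  fix e assume "e \<in> path_edges (u # p)"
  then obtain i where i: "Suc i < Suc (length p)" "e = {(u#p) ! i, (u#p) ! Suc i}"
    by (auto simp: path_edges_def)
  show "e \<in> insert {u, hd p} (path_edges p)"
  proof (cases i)
    case 0
    then show ?thesis using i assms by (simp add: hd_conv_nth)
  next
    case (Suc j)
    then show ?thesis using i by (auto simp: path_edges_def)
  qed
next
  fix e assume "e \<in> insert {u, hd p} (path_edges p)"
  then show "e \<in> path_edges (u # p)"
  proof
    assume "e = {u, hd p}"
    then have "e = {(u#p) ! 0, (u#p) ! Suc 0}" using assms by (simp add: hd_conv_nth)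
    moreover have "Suc 0 < length (u#p)" using assms by simp
    ultimately show ?thesis unfolding path_edges_def by blast
  next
    assume "e \<in> path_edges p"
    then obtain i where "Suc i < length p" "e = {p ! i, p ! Suc i}" by (auto simp: path_edges_def)
    then have "e = {(u#p) ! Suc i, (u#p) ! Suc (Suc i)}" "Suc (Suc i) < length (u#p)"
      by auto
    then show ?thesis unfolding path_edges_def by blast
  qed
qed

lemma path_edges_two: "path_edges [u, v] = {{u, v}}"
  by (auto simp: path_edges_def)

lemma ginv_new:
  assumes "ginv (P, O0, O1) Ps" "u \<noteq> v" "u \<notin> O0" "v \<notin> O0"
  shows "ginv (P @ [(u, v)], insert v (insert u O0), O1) (insert [u, v] Ps)"
proof -
  from assms(1) have fin: "finite Ps" and paths: "\<forall>p\<in>Ps. is_path p"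
    and dis: "\<forall>p\<in>Ps. \<forall>q\<in>Ps. p \<noteq> q \<longrightarrow> set p \<inter> set q = {}"
    and ed: "set (map undir P) = \<Union> (path_edges ` Ps)"
    and o0: "O0 = \<Union> (set ` Ps)" and o1: "O1 = \<Union> (interior ` Ps)"
    unfolding ginv_def by auto
  have d1: "set q \<inter> set [u, v] = {}" if "q \<in> Ps" for q
    using that o0 assms(3,4) by auto
  have "\<forall>a\<in>insert [u,v] Ps. \<forall>b\<in>insert [u,v] Ps. a \<noteq> b \<longrightarrow> set a \<inter> set b = {}"
    using d1 dis by blast
  moreover have "set (map undir (P @ [(u,v)])) = \<Union> (path_edges ` insert [u,v] Ps)"
    using ed by (simp add: path_edges_two undir_def)
  moreover have "insert v (insert u O0) = \<Union> (set ` insert [u,v] Ps)"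
    using o0 by auto
  moreover have "interior [u, v] = {}" by (simp add: interior_def)
  then have "O1 = \<Union> (interior ` insert [u,v] Ps)"
    using o1 by simp
  moreover have "is_path [u, v]" using assms(2) by (simp add: is_path_def)
  ultimately show ?thesis using fin paths unfolding ginv_def by simp
qed

lemma ginv_ext:
  assumes "ginv (P, O0, O1) Ps" "p \<in> Ps" "is_path p'" "set p' = insert w (set p)"
    "path_edges p' = insert {x, w} (path_edges p)" "interior p' = insert x (interior p)"
    "w \<notin> O0" "undir e = {x, w}"
  shows "ginv (P @ [e], insert w O0, insert x O1) (insert p' (Ps - {p}))"
proof -
  from assms(1) have fin: "finite Ps" and paths: "\<forall>p\<in>Ps. is_path p"
    and dis: "\<forall>p\<in>Ps. \<forall>q\<in>Ps. p \<noteq> q \<longrightarrow> set p \<inter> set q = {}"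
    and ed: "set (map undir P) = \<Union> (path_edges ` Ps)"
    and o0: "O0 = \<Union> (set ` Ps)" and o1: "O1 = \<Union> (interior ` Ps)"
    unfolding ginv_def by auto
  have d1: "set q \<inter> set p' = {}" if "q \<in> Ps - {p}" for q
  proof -
    have q: "q \<in> Ps" "q \<noteq> p" using that by auto
    have "set q \<inter> set p = {}" using dis q assms(2) by metis
    moreover have "set q \<subseteq> O0" using o0 q(1) by blast
    then have "w \<notin> set q" using assms(7) by blast
    ultimately show ?thesis unfolding assms(4) by simp
  qed
  have U: "\<Union> (f ` insert p' (Ps - {p})) = f p' \<union> \<Union> (f ` (Ps - {p}))" for f :: "'a list \<Rightarrow> 'b set"
    by simp
  have U2: "\<Union> (f ` Ps) = f p \<union> \<Union> (f ` (Ps - {p}))" for f :: "'a list \<Rightarrow> 'b set"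
    using assms(2) by blast
  have "\<forall>a\<in>insert p' (Ps - {p}). \<forall>b\<in>insert p' (Ps - {p}). a \<noteq> b \<longrightarrow> set a \<inter> set b = {}"
  proof (intro ballI impI)
    fix a b assume a: "a \<in> insert p' (Ps - {p})" and b: "b \<in> insert p' (Ps - {p})" and ab: "a \<noteq> b"
    show "set a \<inter> set b = {}"
    proof (cases "a = p'")
      case True
      then have "b \<in> Ps - {p}" using b ab by simp
      then show ?thesis using d1 True by (simp add: Int_commute)
    next
      case False
      then have a': "a \<in> Ps - {p}" using a by simp
      show ?thesis
      proof (cases "b = p'")
        case True
        then show ?thesis using d1 a' by simp
      next
        case False
        then have "b \<in> Ps" using b by simp
        then show ?thesis using dis a' ab by simp
      qed
    qed
  qed
  moreover have "set (map undir (P @ [e])) = \<Union> (path_edges ` insert p' (Ps - {p}))"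
    unfolding U using ed U2[of path_edges] assms(5,8) by simp
  moreover have "insert w O0 = \<Union> (set ` insert p' (Ps - {p}))"
    unfolding U using o0 U2[of set] assms(4) by simp
  moreover have "insert x O1 = \<Union> (interior ` insert p' (Ps - {p}))"
    unfolding U using o1 U2[of interior] assms(6) by simp
  moreover have "finite (insert p' (Ps - {p}))" using fin by simp
  moreover have "\<forall>a\<in>insert p' (Ps - {p}). is_path a" using paths assms(3) by simp
  ultimately show ?thesis unfolding ginv_def by simp
qed

lemma ginv_ext2:
  assumes "ginv (P, O0, O1) Ps" "x \<in> O0" "x \<notin> O1" "w \<notin> O0" "undir e = {x, w}"
  shows "\<exists>Ps'. ginv (P @ [e], insert w O0, insert x O1) Ps'"
proof -
  from assms(1) have paths: "\<forall>p\<in>Ps. is_path p"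
    and o0: "O0 = \<Union> (set ` Ps)" and o1: "O1 = \<Union> (interior ` Ps)"
    unfolding ginv_def by auto
  obtain p where p: "p \<in> Ps" "x \<in> set p" using o0 assms(2) by blast
  have ip: "distinct p" "length p \<ge> 2" using paths p(1) by (auto simp: is_path_def)
  have xe: "x = hd p \<or> x = last p" using assms(3) o1 p unfolding interior_def by blast
  have wp: "w \<notin> set p" using assms(4) o0 p by blast
  have pne: "p \<noteq> []" using ip by auto
  have hl: "hd p \<noteq> last p"
  proof
    assume h: "hd p = last p"
    obtain a b q where "p = a # b # q" using ip by (cases p; cases "tl p"; auto)
    then show False using h ip(1) by (cases q rule: rev_cases) auto
  qed
  show ?thesis
  proof (cases "x = last p")
    case True
    let ?p' = "p @ [w]"
    have "is_path ?p'" using ip wp by (simp add: is_path_def)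
    moreover have "set ?p' = insert w (set p)" by simp
    moreover have "path_edges ?p' = insert {x, w} (path_edges p)"
      using path_edges_snoc[OF pne] True by simp
    moreover have "interior ?p' = insert x (interior p)"
      using True wp hl pne unfolding interior_def by (auto simp: hd_append)
    ultimately show ?thesis using ginv_ext[OF assms(1) p(1) _ _ _ _ assms(4,5)] by blast
  next
    case False
    then have xh: "x = hd p" using xe by blast
    let ?p' = "w # p"
    have "is_path ?p'" using ip wp by (simp add: is_path_def)
    moreover have "set ?p' = insert w (set p)" by simp
    moreover have "path_edges ?p' = insert {x, w} (path_edges p)"
      using path_edges_cons[OF pne] xh by (simp add: insert_commute)
    moreover have "interior ?p' = insert x (interior p)"
      using xh wp hl pne unfolding interior_def by auto
    ultimately show ?thesis using ginv_ext[OF assms(1) p(1) _ _ _ _ assms(4,5)] by blast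
  qed
qed

lemma ginv_step:
  assumes "ginv st Ps" "fst e \<noteq> snd e"
  shows "\<exists>Ps'. ginv (greedy_step st e) Ps'"
proof -
  obtain P O0 O1 where st: "st = (P, O0, O1)" by (cases st)
  obtain u v where e: "e = (u, v)" by (cases e)
  have uv: "u \<noteq> v" using assms(2) e by simp
  have A: "ginv (P, O0, O1) Ps" using assms st by simp
  show ?thesis
  proof (cases "v \<notin> O0 \<and> u \<notin> O0")
    case True
    then show ?thesis using ginv_new[OF A uv] st e by (auto simp: greedy_step_def)
  next
    case F1: False
    show ?thesis
    proof (cases "v \<notin> O1 \<and> u \<notin> O0")
      case True
      then have "v \<in> O0" using F1 by blast
      then have "\<exists>Ps'. ginv (P @ [(u,v)], insert u O0, insert v O1) Ps'"
        using ginv_ext2[OF A, of v u "(u,v)"] True by (auto simp: undir_def insert_commute)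
      then show ?thesis using True F1 st e by (simp add: greedy_step_def)
    next
      case F2: False
      show ?thesis
      proof (cases "v \<notin> O0 \<and> u \<notin> O1")
        case True
        then have "u \<in> O0" using F1 by blast
        then have "\<exists>Ps'. ginv (P @ [(u,v)], insert v O0, insert u O1) Ps'"
          using ginv_ext2[OF A, of u v "(u,v)"] True by (auto simp: undir_def)
        then show ?thesis using True F1 F2 st e by (simp add: greedy_step_def)
      next
        case False
        then show ?thesis using A F1 F2 st e by (auto simp: greedy_step_def)
      qed
    qed
  qed
qed

lemma ginv_foldl:
  assumes "ginv st Ps" "\<forall>e\<in>set es. fst e \<noteq> snd e"
  shows "\<exists>Ps'. ginv (foldl greedy_step st es) Ps'"
  using assms
proof (induction es arbitrary: st Ps)
  case Nil
  then show ?case by auto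
next
  case (Cons e es)
  obtain Ps' where "ginv (greedy_step st e) Ps'" using ginv_step Cons.prems by fastforce
  then show ?case using Cons by simp
qed

theorem claim4p1:
  fixes V :: "'a set" and E :: "'a set set" and es :: "('a \<times> 'a) list"
  assumes "simple_graph V E"
    and "edge_ordering E es"
  shows "vertex_disjoint_paths (set (map undir (algorithm1 es)))"
proof -
  have ne: "\<forall>e\<in>set es. fst e \<noteq> snd e"
  proof
    fix e assume e: "e \<in> set es"
    obtain a b where ab: "e = (a, b)" by (cases e)
    have "{a, b} \<in> E" using assms(2) e ab unfolding edge_ordering_def undir_def by force
    then obtain x y where "{a, b} = {x, y}" "x \<noteq> y" using assms(1) unfolding simple_graph_def by blast
    then show "fst e \<noteq> snd e" using ab by (auto simp: doubleton_eq_iff)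
  qed
  have "ginv ([], {}, {}) {}" by (simp add: ginv_def)
  then obtain Ps where "ginv (foldl greedy_step ([], {}, {}) es) Ps" using ginv_foldl ne by blast
  then show ?thesis unfolding algorithm1_def vertex_disjoint_paths_def ginv_def
    by (auto split: prod.splits)
qed

end
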